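(* Consider the optical channel with a direct-detection receiver: the input is a coherent state $|S\rangle$ with random amplitude $S\in\mathbb{C}$ subject to $\mathbb{E}[|S|^2]\le\mathcal{E}$, and the output is the photon count, which given $S$ is Poisson distributed with mean $|S|^2$. Let $C_{\sf DD}(\mathcal{E})$ be its capacity (in nats per channel use). As $\mathcal{E}\to0$, the optimal input distribution is on-off keying, $$|S\rangle=\begin{cases}|0\rangle&\text{with probability }1-p^*,\\ |\sqrt{\mathcal{E}/p^*}\rangle&\text{with probability }p^*,\end{cases}\qquad\text{with}\quad \lim_{\mathcal{E}\to0}\frac{p^*}{\frac{\mathcal{E}}{2}\log\frac{1}{\mathcal{E}}}=1,$$ and $$C_{\sf DD}(\mathcal{E})=\mathcal{E}\log\frac1{\mathcal{E}}-\mathcal{E}\log\log\frac1{\mathcal{E}}+O(\mathcal{E}).$$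
   Context: $\log$ is the natural logarithm. $O(\mathcal{E})$ denotes a function $f(\mathcal{E})$ with $\limsup_{\mathcal{E}\to0}|f(\mathcal{E})/\mathcal{E}|<\infty$. *)

theory Defs
  imports "HOL-Probability.Probability" "HOL-Library.Landau_Symbols"
begin

definition poi :: "real \<Rightarrow> nat \<Rightarrow> real" where
  "poi l k = exp (- l) * l ^ k / fact k"

definition out_pmf :: "complex measure \<Rightarrow> nat \<Rightarrow> real" where
  "out_pmf M k = (\<integral>s. poi ((cmod s)\<^sup>2) k \<partial>M)"

definition div_term :: "real \<Rightarrow> real \<Rightarrow> real" where
  "div_term p q = (if p = 0 then 0 else p * ln (p / q))"

text \<open>Mutual information I(S;Y) in nats: E_S[ D(P_{Y|S} || P_Y) ].\<close>
definition info :: "complex measure \<Rightarrow> real" where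
  "info M = (\<integral>s. (\<Sum>k. div_term (poi ((cmod s)\<^sup>2) k) (out_pmf M k)) \<partial>M)"

definition admissible :: "real \<Rightarrow> complex measure \<Rightarrow> bool" where
  "admissible E M \<longleftrightarrow> prob_space M \<and> sets M = sets borel \<and>
     integrable M (\<lambda>s. (cmod s)\<^sup>2) \<and> (\<integral>s. (cmod s)\<^sup>2 \<partial>M) \<le> E"

definition C_DD :: "real \<Rightarrow> real" where
  "C_DD E = Sup (info ` {M. admissible E M})"

definition ook :: "real \<Rightarrow> real \<Rightarrow> complex pmf" where
  "ook E p = map_pmf (\<lambda>b. if b then complex_of_real (sqrt (E / p)) else 0) (bernoulli_pmf p)"

end

theory Submission
  imports Defs
begin

lemma poi_nonneg: "0 \<le> l \<Longrightarrow> 0 \<le> poi l k"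
  unfolding poi_def by simp

lemma poi_pos: "0 < l \<Longrightarrow> 0 < poi l k"
  unfolding poi_def by simp

lemma poi_sums: "(\<lambda>k. poi l k) sums 1"
proof -
  have "(\<lambda>k. l^k / fact k) sums exp l" using exp_converges[of l] by (simp add: divide_inverse_commute)
  then have "(\<lambda>k. exp (-l) * (l^k / fact k)) sums (exp (-l) * exp l)" by (rule sums_mult)
  then show ?thesis unfolding poi_def by (simp add: exp_minus field_simps)
qed

lemma poi_Suc: "poi l (Suc k) = l * poi l k / Suc k"
  unfolding poi_def by (simp add: field_simps)

lemma poi_k_sums: "(\<lambda>k. real k * poi l k) sums l"
proof -
  have "(\<lambda>k. l * poi l k) sums (l * 1)" by (rule sums_mult[OF poi_sums])
  then have "(\<lambda>k. real (Suc k) * poi l (Suc k)) sums l" by (simp add: poi_Suc)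
  then show ?thesis by (subst (asm) sums_Suc_iff) simp
qed

lemma poi_zero: "poi 0 k = (if k = 0 then 1 else 0)"
  unfolding poi_def by simp

lemma poi_le_u: assumes "0 \<le> l" "k \<noteq> 0" shows "poi l k \<le> 1 - exp (-l)"
proof -
  have "sum (poi l) {0, k} \<le> suminf (poi l)"
    by (rule sum_le_suminf) (use poi_sums[of l] assms in \<open>auto simp: sums_iff poi_nonneg\<close>)
  moreover have "poi l 0 = exp (-l)" by (simp add: poi_def)
  ultimately show ?thesis using poi_sums[of l] assms by (simp add: sums_iff)
qed

lemma poi_le_1: assumes "0 \<le> l" shows "poi l k \<le> 1"
proof -
  have "sum (poi l) {k} \<le> suminf (poi l)"
    by (rule sum_le_suminf) (use poi_sums[of l] assms in \<open>auto simp: sums_iff poi_nonneg\<close>)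
  then show ?thesis using poi_sums[of l] by (simp add: sums_iff)
qed

lemma R3: fixes l :: real assumes "0 \<le> l" shows "(1 - exp (-l)) + (1 - exp (-l))^2/2 \<le> l"
proof -
  let ?f = "\<lambda>x::real. x - (1 - exp (-x)) - (1 - exp (-x))^2/2"
  have "?f 0 \<le> ?f l"
  proof (rule DERIV_nonneg_imp_increasing_open[OF assms])
    fix x :: real
    have "(?f has_real_derivative (1 - exp (-x))^2) (at x)"
      by (auto intro!: derivative_eq_intros simp: power2_eq_square field_simps)
    then show "\<exists>y. (?f has_real_derivative y) (at x) \<and> 0 \<le> y" by auto
  next
    show "continuous_on {0..l} ?f" by (intro continuous_intros) auto
  qed
  then show ?thesis by simp
qed

lemma lnx4: fixes x :: real assumes "0 < x" shows "ln x \<le> 1 + x/4"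
proof -
  have "ln (x/4) \<le> x/4 - 1" using assms by (intro ln_le_minus_one) auto
  moreover have "ln (x/4) = ln x - ln 4" using assms by (simp add: ln_div)
  moreover have "ln (4::real) = 2 * ln 2" using ln_realpow[of 2 2] by simp
  ultimately show ?thesis using ln_2_less_1 by linarith
qed

lemma R2: fixes L l :: real assumes L: "1 \<le> L" and l: "0 \<le> l"
  shows "(1 - exp (-l)) * ln (1 - exp (-l)) + (1 - exp (-l)) * L \<le> l * (L - ln L + 1)"
proof (cases "l = 0")
  case True then show ?thesis by simp
next
  case False
  define u where "u = 1 - exp (-l)"
  have u: "0 < u" using False l by (simp add: u_def)
  have lnL: "ln L \<le> L/2 + 1" proof -
    have "ln 2 + ln L \<le> 1 + L/2" using lnx4[of "2*L"] L by (simp add: ln_mult)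
    moreover have "0 < ln (2::real)" by simp
    ultimately show ?thesis by linarith
  qed
  define b where "b = L - ln L + 1"
  have bL: "L/2 \<le> b" using lnL by (simp add: b_def)
  have lu: "u + u^2/2 \<le> l" using R3[OF l] by (simp add: u_def)
  have "ln (u*L) \<le> 1 + u*L/4" using u L by (intro lnx4) auto
  then have "ln u \<le> 1 + u*L/4 - ln L" using u L by (simp add: ln_mult)
  then have "u * ln u + u * L \<le> u * (1 + u*L/4 - ln L) + u * L"
    using u by (simp add: mult_left_mono)
  also have "\<dots> = u * b + u^2 * (L/4)" by (simp add: b_def power2_eq_square algebra_simps)
  also have "\<dots> \<le> u * b + u^2 * (b/2)" using bL u by (intro add_left_mono mult_left_mono) auto
  also have "\<dots> = (u + u^2/2) * b" by (simp add: algebra_simps)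
  also have "\<dots> \<le> l * b" using lu bL L by (intro mult_right_mono) auto
  finally show ?thesis by (simp add: u_def b_def)
qed

definition Qd :: "real \<Rightarrow> nat \<Rightarrow> real" where
  "Qd E k = (if k = 0 then 1 - E else E * (1/2)^k)"

definition bt :: "real \<Rightarrow> real \<Rightarrow> nat \<Rightarrow> real" where
  "bt E l k = poi l k * ln (poi l k / Qd E k) - poi l k + Qd E k"

definition Kc :: "real \<Rightarrow> real" where
  "Kc E = ln (1/E) - ln (ln (1/E)) + 1 + ln 2"

lemma Qd_pos: "0 < E \<Longrightarrow> E < 1 \<Longrightarrow> 0 < Qd E k"
  by (simp add: Qd_def)

lemma Qd_sums: "Qd E sums 1"
proof -
  have "(\<lambda>n. (E/2) * (1/2::real)^n) sums ((E/2) * (1 / (1 - 1/2)))"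
    by (intro sums_mult geometric_sums) auto
  then have "(\<lambda>n. Qd E (Suc n)) sums E" by (simp add: Qd_def)
  then show ?thesis by (subst (asm) sums_Suc_iff) (simp add: Qd_def)
qed

lemma klog_nonneg: fixes p Q :: real assumes "0 \<le> p" "0 < Q" shows "0 \<le> p * ln (p / Q) - p + Q"
proof (cases "p = 0")
  case True then show ?thesis using assms by simp
next
  case False
  then have p: "0 < p" using assms by simp
  have "ln (Q/p) \<le> Q/p - 1" using p assms by (intro ln_le_minus_one) auto
  moreover have "ln (p/Q) = - ln (Q/p)" using p assms by (simp add: ln_div)
  ultimately have "p * ln (p/Q) \<ge> p * (1 - Q/p)" using p
    by (intro mult_left_mono) auto
  moreover have "p * (1 - Q/p) = p - Q" using p by (simp add: field_simps)
  ultimately show ?thesis by linarith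
qed

lemma bt_nonneg: "0 \<le> l \<Longrightarrow> 0 < E \<Longrightarrow> E < 1 \<Longrightarrow> 0 \<le> bt E l k"
  unfolding bt_def by (intro klog_nonneg poi_nonneg Qd_pos) auto

lemma bt_bound:
  assumes E: "0 < E" "E \<le> 1/2" "E \<le> exp (-1)" and l: "0 \<le> l"
  shows "summable (bt E l) \<and> suminf (bt E l) \<le> 2*E + l * Kc E"
proof -
  define L where "L = ln (1/E)"
  have L1: "1 \<le> L"
  proof -
    have "exp 1 \<le> 1/E" using E by (simp add: exp_minus field_simps)
    then have "ln (exp 1) \<le> ln (1/E)" using E by (subst ln_le_cancel_iff) auto
    then show ?thesis by (simp add: L_def)
  qed
  define u where "u = 1 - exp (-l)"
  define d where "d k = (if k = 0 then bt E l 0 else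
      poi l k * (ln u + L - 1) + real k * ln 2 * poi l k + Qd E k)" for k
  have s1: "(\<lambda>n. poi l (Suc n)) sums u"
    using poi_sums[of l] by (subst sums_Suc_iff) (simp add: u_def poi_def[of l 0])
  have s2: "(\<lambda>n. real (Suc n) * poi l (Suc n)) sums l"
    using poi_k_sums[of l] by (subst sums_Suc_iff) simp
  have s3: "(\<lambda>n. Qd E (Suc n)) sums E"
    using Qd_sums[of E] by (subst sums_Suc_iff) (simp add: Qd_def)
  have "(\<lambda>n. d (Suc n)) sums (u * (ln u + L - 1) + ln 2 * l + E)"
    unfolding d_def using sums_add[OF sums_add[OF sums_mult2[OF s1, of "ln u + L - 1"]
        sums_mult[OF s2, of "ln 2"]] s3]
    by (simp add: algebra_simps)
  then have dsum: "d sums (u * (ln u + L - 1) + ln 2 * l + E + bt E l 0)"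
    by (subst (asm) sums_Suc_iff) (simp add: d_def)
  have b0: "0 \<le> bt E l k" for k using bt_nonneg[OF l] E by auto
  have bd: "bt E l k \<le> d k" for k
  proof (cases "k = 0")
    case True then show ?thesis by (simp add: d_def)
  next
    case k: False
    show ?thesis
    proof (cases "poi l k = 0")
      case True then show ?thesis using k by (simp add: d_def bt_def)
    next
      case False
      then have p: "0 < poi l k" using poi_nonneg[OF l, of k] by linarith
      have pu: "poi l k \<le> u" using poi_le_u[OF l k] by (simp add: u_def)
      have lnQ: "ln (Qd E k) = - L - real k * ln 2"
        using k E by (simp add: Qd_def L_def ln_mult ln_realpow ln_div)
      have "ln (poi l k / Qd E k) = ln (poi l k) + L + real k * ln 2"
        using p Qd_pos[of E k] E lnQ by (simp add: ln_div)
      moreover have "ln (poi l k) \<le> ln u" using p pu by simp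
      ultimately have "ln (poi l k / Qd E k) \<le> ln u + L + real k * ln 2" by simp
      then have "poi l k * ln (poi l k / Qd E k) \<le> poi l k * (ln u + L + real k * ln 2)"
        using p by (intro mult_left_mono) auto
      then show ?thesis using k by (simp add: d_def bt_def algebra_simps)
    qed
  qed
  have summ: "summable (bt E l)"
    by (rule summable_comparison_test[of _ d]) (use b0 bd dsum in \<open>auto simp: sums_iff\<close>)
  have "suminf (bt E l) \<le> suminf d" using summ dsum bd by (intro suminf_le) (auto simp: sums_iff)
  also have "\<dots> = u * ln u + u * L + ln 2 * l + (exp (-l) * (- l - ln (1 - E)))"
  proof -
    have "bt E l 0 = exp (-l) * (- l - ln (1 - E)) - exp (-l) + 1 - E"
      using E by (simp add: bt_def poi_def Qd_def ln_div)
    then show ?thesis using dsum by (simp add: sums_iff u_def algebra_simps)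
  qed
  also have "\<dots> \<le> l * (L - ln L + 1) + ln 2 * l + 2 * E"
  proof -
    have "u * ln u + u * L \<le> l * (L - ln L + 1)" unfolding u_def by (rule R2[OF L1 l])
    moreover have "exp (-l) * (- l - ln (1 - E)) \<le> 2 * E"
    proof -
      have "- E - 2 * E^2 \<le> ln (1 - E)" using E by (intro ln_one_minus_pos_lower_bound) auto
      moreover have "E * (2*E) \<le> E * 1" using E by (intro mult_left_mono) auto
      ultimately have m: "- ln (1 - E) \<le> 2 * E" by (simp add: power2_eq_square)
      have "exp (-l) * (- l - ln (1 - E)) \<le> exp (-l) * (2 * E)"
        using m l by (intro mult_left_mono) auto
      also have "\<dots> \<le> 2 * E" using l E by (simp add: mult_le_cancel_right1)
      finally show ?thesis .
    qed
    ultimately show ?thesis by linarith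
  qed
  also have "\<dots> = 2*E + l * Kc E" by (simp add: Kc_def L_def algebra_simps)
  finally show ?thesis using summ by simp
qed

lemma Kc_nonneg: assumes "0 < E" "E \<le> exp (-1)" shows "0 \<le> Kc E"
proof -
  have "exp 1 \<le> 1/E" using assms by (simp add: exp_minus field_simps)
  then have "ln (exp 1) \<le> ln (1/E)" using assms by (subst ln_le_cancel_iff) auto
  then have L: "1 \<le> ln (1/E)" by simp
  have "ln (ln (1/E)) \<le> ln (1/E) - 1" using L by (intro ln_le_minus_one) auto
  moreover have "0 < ln (2::real)" by simp
  ultimately show ?thesis unfolding Kc_def by linarith
qed

lemma bt_le: assumes "0 \<le> l" "0 < E" "E < 1" shows "bt E l k \<le> - ln (Qd E k) + Qd E k"
proof -
  have p0: "0 \<le> poi l k" and p1: "poi l k \<le> 1" using assms poi_nonneg poi_le_1 by auto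
  have Q: "0 < Qd E k" "Qd E k \<le> 1" using assms by (auto simp: Qd_def power_le_one mult_le_one)
  have "poi l k * ln (poi l k / Qd E k) \<le> - ln (Qd E k)"
  proof (cases "poi l k = 0")
    case True then show ?thesis using Q by simp
  next
    case False
    then have pp: "0 < poi l k" using p0 by simp
    have "ln (poi l k / Qd E k) = ln (poi l k) - ln (Qd E k)" using pp Q by (simp add: ln_div)
    moreover have "ln (poi l k) \<le> 0" using pp p1 by simp
    moreover have "0 \<le> - ln (Qd E k)" using Q by simp
    ultimately have "ln (poi l k / Qd E k) \<le> - ln (Qd E k)" by simp
    then have "poi l k * ln (poi l k / Qd E k) \<le> poi l k * (- ln (Qd E k))" using pp by (intro mult_left_mono) auto
    also have "\<dots> \<le> 1 * (- ln (Qd E k))" using p1 Q by (intro mult_right_mono) auto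
    finally show ?thesis by simp
  qed
  then show ?thesis using p0 unfolding bt_def by linarith
qed

lemma converse:
  fixes M :: "complex measure" and E :: real
  assumes PS: "prob_space M"
    and meas: "\<And>f::complex \<Rightarrow> real. f \<in> borel_measurable borel \<Longrightarrow> f \<in> borel_measurable M"
    and intl: "integrable M (\<lambda>s. (cmod s)^2)"
    and le: "(\<integral>s. (cmod s)^2 \<partial>M) \<le> E"
    and E: "0 < E" "E \<le> 1/2" "E \<le> exp (-1)"
  shows "info M \<le> 2*E + E * Kc E"
proof -
  interpret prob_space M by (rule PS)
  have E1: "E < 1" using E by simp
  have Kc0: "0 \<le> Kc E" using Kc_nonneg E by auto
  define p where "p k s = poi ((cmod s)^2) k" for k s
  define P where "P k = out_pmf M k" for k
  have mp[measurable]: "p k \<in> borel_measurable M" for k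
    unfolding p_def poi_def by (rule meas) measurable
  have ml[measurable]: "(\<lambda>s. (cmod s)^2) \<in> borel_measurable M"
    by (rule meas) measurable
  have p0: "0 \<le> p k s" and p1: "p k s \<le> 1" for k s
    unfolding p_def using poi_nonneg poi_le_1 by auto
  have ip: "integrable M (p k)" for k
    by (rule integrable_const_bound[of _ 1]) (use p0 p1 in auto)
  have Pint: "P k = (\<integral>s. p k s \<partial>M)" for k unfolding P_def out_pmf_def p_def by simp
  have P0: "0 \<le> P k" for k unfolding Pint using p0 by simp
  define a where "a k s = div_term (p k s) (P k) - p k s + P k" for k s
  have ma[measurable]: "(\<lambda>s. a k s) \<in> borel_measurable M" for k
    unfolding a_def div_term_def by measurable
  have mb[measurable]: "(\<lambda>s. bt E ((cmod s)^2) k) \<in> borel_measurable M" for k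
    unfolding bt_def by (rule meas) (unfold poi_def, measurable)
  have bnn: "0 \<le> bt E ((cmod s)^2) k" for s k using bt_nonneg E1 E by auto
  have key: "(AE s in M. 0 \<le> a k s) \<and>
      (\<integral>\<^sup>+s. ennreal (a k s) \<partial>M) \<le> (\<integral>\<^sup>+s. ennreal (bt E ((cmod s)^2) k) \<partial>M)" for k
  proof (cases "P k = 0")
    case True
    then have "AE s in M. p k s = 0"
      using integral_nonneg_eq_0_iff_AE[OF ip, of k] p0 unfolding Pint by auto
    then have ae: "AE s in M. a k s = 0" by eventually_elim (simp add: a_def True div_term_def)
    then have "(\<integral>\<^sup>+s. ennreal (a k s) \<partial>M) = (\<integral>\<^sup>+s. 0 \<partial>M)"
      by (intro nn_integral_cong_AE) (auto elim: AE_mp)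
    then show ?thesis using ae by (auto elim: AE_mp)
  next
    case False
    then have Pp: "0 < P k" using P0[of k] by simp
    define Q where "Q = Qd E k"
    have Qp: "0 < Q" using E E1 by (simp add: Q_def Qd_pos)
    define c where "c s = p k s * ln (Q / P k) - Q + P k" for s
    have abc: "a k s = bt E ((cmod s)^2) k + c s" for s
    proof (cases "p k s = 0")
      case True then show ?thesis by (simp add: a_def c_def bt_def div_term_def Q_def p_def)
    next
      case False
      then have pp: "0 < p k s" using p0[of k s] by simp
      have "ln (p k s / P k) = ln (p k s / Q) + ln (Q / P k)"
        using pp Pp Qp by (simp add: ln_div)
      then show ?thesis using False
        by (simp add: a_def c_def bt_def div_term_def Q_def p_def algebra_simps)
    qed
    have ann: "0 \<le> a k s" for s
    proof (cases "p k s = 0")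
      case True then show ?thesis by (simp add: a_def div_term_def P0)
    next
      case False then show ?thesis using klog_nonneg[OF p0[of k s] Pp] by (simp add: a_def div_term_def)
    qed
    have ic: "integrable M c" unfolding c_def using ip[of k] by auto
    have ib: "integrable M (\<lambda>s. bt E ((cmod s)^2) k)"
    proof (rule integrable_const_bound[of _ "- ln Q + Q"])
      show "AE s in M. norm (bt E ((cmod s)^2) k) \<le> - ln Q + Q"
        using bt_le[of _ E k] bnn E E1 by (auto simp: Q_def)
    qed simp
    have ia: "integrable M (a k)" unfolding abc[abs_def] using ib ic by auto
    have "(\<integral>s. c s \<partial>M) = P k * ln (Q / P k) - Q + P k"
      unfolding c_def using ip[of k] by (simp add: Pint prob_space)
    also have "\<dots> \<le> 0"
    proof -
      have "ln (Q / P k) \<le> Q / P k - 1" using Qp Pp by (intro ln_le_minus_one) auto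
      then have "P k * ln (Q / P k) \<le> P k * (Q / P k - 1)" using Pp by (intro mult_left_mono) auto
      also have "\<dots> = Q - P k" using Pp by (simp add: field_simps)
      finally show ?thesis by simp
    qed
    finally have c0: "(\<integral>s. c s \<partial>M) \<le> 0" .
    have "(\<integral>\<^sup>+s. ennreal (a k s) \<partial>M) = ennreal (\<integral>s. a k s \<partial>M)"
      using ia ann by (intro nn_integral_eq_integral) auto
    also have "(\<integral>s. a k s \<partial>M) = (\<integral>s. bt E ((cmod s)^2) k \<partial>M) + (\<integral>s. c s \<partial>M)"
      unfolding abc using ib ic by simp
    also have "ennreal \<dots> \<le> ennreal (\<integral>s. bt E ((cmod s)^2) k \<partial>M)"
      using c0 by (intro ennreal_leI) simp
    also have "\<dots> = (\<integral>\<^sup>+s. ennreal (bt E ((cmod s)^2) k) \<partial>M)"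
      using ib bnn by (intro nn_integral_eq_integral[symmetric]) auto
    finally have le': "(\<integral>\<^sup>+s. ennreal (a k s) \<partial>M) \<le> (\<integral>\<^sup>+s. ennreal (bt E ((cmod s)^2) k) \<partial>M)" .
    show ?thesis by (intro conjI AE_I2 le') (rule ann)
  qed
  have aeall: "AE s in M. \<forall>k. 0 \<le> a k s"
    using key by (subst AE_all_countable) auto
  have S_le: "(\<integral>\<^sup>+s. (\<Sum>k. ennreal (a k s)) \<partial>M) \<le> ennreal (2*E + E * Kc E)"
  proof -
    have "(\<integral>\<^sup>+s. (\<Sum>k. ennreal (a k s)) \<partial>M) = (\<Sum>k. \<integral>\<^sup>+s. ennreal (a k s) \<partial>M)"
      by (rule nn_integral_suminf) measurable
    also have "\<dots> \<le> (\<Sum>k. \<integral>\<^sup>+s. ennreal (bt E ((cmod s)^2) k) \<partial>M)"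
      using key by (intro suminf_le) auto
    also have "\<dots> = (\<integral>\<^sup>+s. (\<Sum>k. ennreal (bt E ((cmod s)^2) k)) \<partial>M)"
      by (rule nn_integral_suminf[symmetric]) measurable
    also have "\<dots> \<le> (\<integral>\<^sup>+s. ennreal (2*E + (cmod s)^2 * Kc E) \<partial>M)"
    proof (intro nn_integral_mono)
      fix s
      have b: "summable (bt E ((cmod s)^2)) \<and> suminf (bt E ((cmod s)^2)) \<le> 2*E + (cmod s)^2 * Kc E"
        using bt_bound[of E "(cmod s)^2"] E by auto
      have "(\<Sum>k. ennreal (bt E ((cmod s)^2) k)) = ennreal (suminf (bt E ((cmod s)^2)))"
        using b bnn by (intro suminf_ennreal2) auto
      also have "\<dots> \<le> ennreal (2*E + (cmod s)^2 * Kc E)" using b by (intro ennreal_leI) auto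
      finally show "(\<Sum>k. ennreal (bt E ((cmod s)^2) k)) \<le> ennreal (2*E + (cmod s)^2 * Kc E)" .
    qed
    also have "\<dots> = ennreal (\<integral>s. 2*E + (cmod s)^2 * Kc E \<partial>M)"
      using intl E Kc0 by (intro nn_integral_eq_integral) auto
    also have "\<dots> \<le> ennreal (2*E + E * Kc E)"
    proof (intro ennreal_leI)
      have "(\<integral>s. 2*E + (cmod s)^2 * Kc E \<partial>M) = 2*E + (\<integral>s. (cmod s)^2 \<partial>M) * Kc E"
        using intl by (simp add: prob_space)
      also have "\<dots> \<le> 2*E + E * Kc E" using le Kc0 by (simp add: mult_right_mono)
      finally show "(\<integral>s. 2*E + (cmod s)^2 * Kc E \<partial>M) \<le> 2*E + E * Kc E" .
    qed
    finally show ?thesis .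
  qed
  have psum1: "(\<Sum>k. ennreal (p k s)) = 1" for s
  proof -
    have "(\<lambda>k. p k s) sums 1" using poi_sums unfolding p_def .
    then show ?thesis using p0 by (simp add: suminf_ennreal2 sums_iff)
  qed
  have Psum: "P sums 1"
  proof -
    have "(\<Sum>k. ennreal (P k)) = (\<Sum>k. \<integral>\<^sup>+s. ennreal (p k s) \<partial>M)"
      using ip p0 by (simp add: Pint nn_integral_eq_integral)
    also have "\<dots> = (\<integral>\<^sup>+s. (\<Sum>k. ennreal (p k s)) \<partial>M)"
      by (rule nn_integral_suminf[symmetric]) measurable
    also have "\<dots> = (\<integral>\<^sup>+s. 1 \<partial>M)" by (simp add: psum1)
    also have "\<dots> = 1" by (simp add: emeasure_space_1)
    finally have e: "(\<Sum>k. ennreal (P k)) = 1" .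
    then have sP: "summable P" using P0 by (intro summable_suminf_not_top) auto
    have "ennreal (suminf P) = 1" using e P0 sP by (simp add: suminf_ennreal2)
    moreover have "0 \<le> suminf P" using sP P0 by (rule suminf_nonneg)
    ultimately have "suminf P = 1"
      by (metis ennreal_1 ennreal_inj zero_le_one)
    then show ?thesis using sP by (simp add: sums_iff)
  qed
  have fin: "AE s in M. (\<Sum>k. ennreal (a k s)) \<noteq> \<infinity>"
  proof (rule nn_integral_PInf_AE)
    show "(\<lambda>s. \<Sum>k. ennreal (a k s)) \<in> borel_measurable M" by measurable
    show "(\<integral>\<^sup>+s. (\<Sum>k. ennreal (a k s)) \<partial>M) \<noteq> \<infinity>"
      using S_le by (metis ennreal_neq_top neq_top_trans infinity_ennreal_def)
  qed
  define g where "g s = (\<Sum>k. div_term (p k s) (P k))" for s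
  have info_eq: "info M = (\<integral>s. g s \<partial>M)" unfolding info_def g_def p_def P_def ..
  have gae: "AE s in M. g s = (\<Sum>k. a k s) \<and> 0 \<le> (\<Sum>k. a k s) \<and>
      ennreal (\<Sum>k. a k s) = (\<Sum>k. ennreal (a k s))"
    using fin aeall
  proof eventually_elim
    case (elim s)
    have sa: "summable (\<lambda>k. a k s)" using elim by (intro summable_suminf_not_top) auto
    have sp: "(\<lambda>k. p k s) sums 1" using poi_sums unfolding p_def .
    have "(\<lambda>k. a k s + p k s - P k) sums ((\<Sum>k. a k s) + 1 - 1)"
      using sa sp Psum by (intro sums_diff sums_add) (auto simp: summable_sums)
    moreover have "a k s + p k s - P k = div_term (p k s) (P k)" for k by (simp add: a_def)
    ultimately have "g s = (\<Sum>k. a k s)" by (simp add: g_def sums_iff)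
    moreover have "0 \<le> (\<Sum>k. a k s)" using elim sa by (intro suminf_nonneg) auto
    moreover have "ennreal (\<Sum>k. a k s) = (\<Sum>k. ennreal (a k s))"
      using sa elim by (simp add: suminf_ennreal2)
    ultimately show ?case by auto
  qed
  have B0: "0 \<le> 2*E + E * Kc E" using E Kc0 by simp
  show ?thesis
  proof (cases "integrable M g")
    case True
    have "ennreal (info M) = (\<integral>\<^sup>+s. ennreal (g s) \<partial>M)"
      unfolding info_eq using True gae by (intro nn_integral_eq_integral[symmetric]) auto
    also have "\<dots> = (\<integral>\<^sup>+s. (\<Sum>k. ennreal (a k s)) \<partial>M)"
      using gae by (intro nn_integral_cong_AE) auto
    also have "\<dots> \<le> ennreal (2*E + E * Kc E)" by (rule S_le)
    finally show ?thesis using B0 by simp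
  next
    case False
    then show ?thesis unfolding info_eq using B0 by (simp add: not_integrable_integral_eq)
  qed
qed

lemma poi_tail_sums: "(\<lambda>n. poi l (Suc n)) sums (1 - exp (-l))"
  using poi_sums[of l] by (subst sums_Suc_iff) (simp add: poi_def[of l 0])

lemma ook_integral:
  assumes "0 < p" "p \<le> 1" "0 < E"
  shows "(\<integral>s. f s \<partial>measure_pmf (ook E p)) = f (complex_of_real (sqrt (E/p))) * p + f 0 * (1 - p)"
  unfolding ook_def using assms by simp

lemma cmod_a: assumes "0 < p" "0 \<le> E" shows "(cmod (complex_of_real (sqrt (E/p))))^2 = E/p"
  using assms by simp

lemma ook_out:
  assumes "0 < p" "p \<le> 1" "0 < E"
  shows "out_pmf (measure_pmf (ook E p)) k = (if k = 0 then 1 - p + p * exp (-(E/p)) else poi (E/p) k * p)"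
  unfolding out_pmf_def using assms by (simp add: ook_integral poi_zero) (simp add: poi_def)

lemma ook_info:
  assumes p: "0 < p" "p \<le> 1" and E: "0 < E"
  shows "info (measure_pmf (ook E p)) =
    p * (exp (-(E/p)) * ln (exp (-(E/p)) / (1 - p + p * exp (-(E/p)))) + (1 - exp (-(E/p))) * ln (1/p))
    + (1 - p) * ln (1 / (1 - p + p * exp (-(E/p))))"
proof -
  define A where "A = E/p"
  define P0 where "P0 = 1 - p + p * exp (-A)"
  have A: "0 < A" using p E by (simp add: A_def)
  have out: "out_pmf (measure_pmf (ook E p)) k = (if k = 0 then P0 else poi A k * p)" for k
    using ook_out[OF p E] by (simp add: A_def P0_def)
  define t where "t k = div_term (poi A k) (out_pmf (measure_pmf (ook E p)) k)" for k
  have tS: "t (Suc n) = poi A (Suc n) * ln (1/p)" for n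
  proof -
    have "0 < poi A (Suc n)" using A by (rule poi_pos)
    then show ?thesis using p by (simp add: t_def div_term_def out ln_div)
  qed
  have "(\<lambda>n. t (Suc n)) sums ((1 - exp (-A)) * ln (1/p))"
    unfolding tS by (rule sums_mult2[OF poi_tail_sums])
  then have ts: "t sums ((1 - exp (-A)) * ln (1/p) + t 0)" by (subst (asm) sums_Suc_iff)
  have t0: "t 0 = exp (-A) * ln (exp (-A) / P0)" by (simp add: t_def div_term_def out poi_def)
  define t' where "t' k = div_term (poi 0 k) (out_pmf (measure_pmf (ook E p)) k)" for k
  have "t' = (\<lambda>k. if k = 0 then ln (1/P0) else 0)"
    by (auto simp: t'_def div_term_def poi_zero out)
  then have t's: "t' sums ln (1/P0)" using sums_single[of 0 "\<lambda>_. ln (1/P0)"] by simp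
  have "info (measure_pmf (ook E p)) = suminf t * p + suminf t' * (1 - p)"
    unfolding info_def using p E by (simp add: ook_integral cmod_a t_def[abs_def] t'_def[abs_def] A_def)
  also have "\<dots> = p * (exp (-A) * ln (exp (-A) / P0) + (1 - exp (-A)) * ln (1/p)) + (1 - p) * ln (1 / P0)"
  proof -
    have st: "suminf t = (1 - exp (-A)) * ln (1/p) + exp (-A) * ln (exp (-A) / P0)"
      using ts t0 by (simp add: sums_iff)
    have st': "suminf t' = ln (1/P0)" using t's by (simp add: sums_iff)
    show ?thesis by (simp only: st st') (simp add: algebra_simps)
  qed
  finally show ?thesis by (simp add: A_def P0_def)
qed

lemma R4: fixes A :: real assumes "0 \<le> A" shows "A - A^2/2 \<le> 1 - exp (-A)"
proof -
  let ?f = "\<lambda>x::real. 1 - exp (-x) - x + x^2/2"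
  have "?f 0 \<le> ?f A"
  proof (rule DERIV_nonneg_imp_increasing_open[OF assms])
    fix x :: real
    have "(?f has_real_derivative (exp (-x) - 1 + x)) (at x)"
      by (auto intro!: derivative_eq_intros simp: power2_eq_square field_simps)
    moreover have "0 \<le> exp (-x) - 1 + x" using exp_ge_add_one_self[of "-x"] by simp
    ultimately show "\<exists>y. (?f has_real_derivative y) (at x) \<and> 0 \<le> y" by blast
  next
    show "continuous_on {0..A} ?f" by (intro continuous_intros) auto
  qed
  then show ?thesis by simp
qed

lemma ook_lower:
  assumes E: "0 < E" "E \<le> exp (-2)"
  shows "E * ln (1/E) - E * ln (ln (1/E)) - 2*E \<le> info (measure_pmf (ook E (E/2 * ln (1/E))))"
proof -
  define L where "L = ln (1/E)"
  have L2: "2 \<le> L"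
  proof -
    have "exp 2 \<le> 1/E" using E by (simp add: exp_minus field_simps)
    then have "ln (exp 2) \<le> ln (1/E)" using E by (subst ln_le_cancel_iff) auto
    then show ?thesis by (simp add: L_def)
  qed
  define p where "p = E/2 * L"
  have pp: "0 < p" using E L2 by (simp add: p_def)
  have EL: "E * L \<le> 1"
  proof -
    have "L \<le> 1/E - 1" unfolding L_def using E by (intro ln_le_minus_one) auto
    then have "E * L \<le> E * (1/E - 1)" using E by (intro mult_left_mono) auto
    also have "\<dots> \<le> 1" using E by (simp add: field_simps)
    finally show ?thesis .
  qed
  have p1: "p \<le> 1" using EL pp by (simp add: p_def)
  define A where "A = E/p"
  have A: "A = 2/L" using E L2 by (simp add: A_def p_def field_simps)
  have A0: "0 < A" using L2 by (simp add: A)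
  define P0 where "P0 = 1 - p + p * exp (-A)"
  have P0p: "0 < P0" and P01: "P0 \<le> 1"
  proof -
    have "exp (-A) \<le> 1" using A0 by simp
    then have "p * exp (-A) \<le> p" using pp by (simp add: mult_le_cancel_left1)
    then show "P0 \<le> 1" by (simp add: P0_def)
    have "0 < p * exp (-A)" using pp by simp
    then show "0 < P0" using p1 by (simp add: P0_def)
  qed
  have info: "info (measure_pmf (ook E p)) =
      P0 * ln (1/P0) - p * A * exp (-A) + p * (1 - exp (-A)) * ln (1/p)"
  proof -
    have "ln (exp (-A) / P0) = - A + ln (1/P0)" using P0p by (simp add: ln_div)
    then show ?thesis using ook_info[OF pp p1 E(1)]
      by (simp add: A_def[symmetric] P0_def[symmetric]) (simp add: P0_def algebra_simps)
  qed
  have t1: "0 \<le> P0 * ln (1/P0)" using P0p P01 by simp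
  have t2: "p * A * exp (-A) \<le> E"
  proof -
    have "p * A * exp (-A) \<le> p * A * 1" using pp A0 by (intro mult_left_mono) auto
    then show ?thesis using pp by (simp add: A_def)
  qed
  have lnp: "ln (1/p) = L + ln 2 - ln L"
  proof -
    have "1/p = 2/(E*L)" by (simp add: p_def field_simps)
    moreover have "ln (2/(E*L)) = ln 2 - (ln E + ln L)" using E L2 by (simp add: ln_div ln_mult)
    moreover have "L = - ln E" using E by (simp add: L_def ln_div)
    ultimately show ?thesis by simp
  qed
  have lnp0: "0 \<le> ln (1/p)" using pp p1 by simp
  have t3: "E - E/L \<le> p * (1 - exp (-A))"
  proof -
    have "p * (A - A^2/2) \<le> p * (1 - exp (-A))" using R4[of A] A0 pp by (intro mult_left_mono) auto
    moreover have "p * (A - A^2/2) = E - E/L" using pp L2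
      by (simp add: A_def p_def power2_eq_square field_simps)
    ultimately show ?thesis by simp
  qed
  have "(E - E/L) * ln (1/p) \<le> p * (1 - exp (-A)) * ln (1/p)"
    using t3 lnp0 by (intro mult_right_mono) auto
  moreover have "(E - E/L) * ln (1/p) = E * L - E * ln L - E + (E * ln 2 - (E/L) * ln 2 + (E/L) * ln L)"
    using L2 by (simp add: lnp field_simps)
  moreover have "0 \<le> E * ln 2 - (E/L) * ln 2 + (E/L) * ln L"
  proof -
    have "(E/L) * ln 2 \<le> E * ln 2" using E L2 by (intro mult_right_mono) (auto simp: field_simps)
    moreover have "0 \<le> (E/L) * ln L" using E L2 by simp
    ultimately show ?thesis by simp
  qed
  ultimately have "E * L - E * ln L - E \<le> p * (1 - exp (-A)) * ln (1/p)" by linarith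
  then have "E * L - E * ln L - 2*E \<le> info (measure_pmf (ook E p))"
    using info t1 t2 by linarith
  then show ?thesis by (simp add: p_def L_def)
qed

lemma bounds:
  assumes E: "0 < E" "E \<le> exp (-2)"
  defines "p \<equiv> E/2 * ln (1/E)"
  shows "0 \<le> C_DD E - info (measure_pmf (ook E p)) \<and>
         C_DD E - info (measure_pmf (ook E p)) \<le> 6 * E \<and>
         \<bar>C_DD E - (E * ln (1 / E) - E * ln (ln (1 / E)))\<bar> \<le> 4 * E"
proof -
  have e2: "exp (-2) \<le> exp (-1::real)" by simp
  have e1: "exp (-1) \<le> (1/2::real)"
  proof -
    have "2 \<le> exp (1::real)" using exp_ge_add_one_self[of 1] by simp
    then show ?thesis by (simp add: exp_minus field_simps)
  qed
  have E1: "E \<le> exp (-1)" "E \<le> 1/2" using E e2 e1 by linarith+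
  define L where "L = ln (1/E)"
  have L2: "2 \<le> L"
  proof -
    have "exp 2 \<le> 1/E" using E by (simp add: exp_minus field_simps)
    then have "ln (exp 2) \<le> ln (1/E)" using E by (subst ln_le_cancel_iff) auto
    then show ?thesis by (simp add: L_def)
  qed
  have pp: "0 < p" using E L2 by (simp add: p_def L_def[symmetric])
  have p1: "p \<le> 1"
  proof -
    have "L \<le> 1/E - 1" unfolding L_def using E by (intro ln_le_minus_one) auto
    then have "E * L \<le> E * (1/E - 1)" using E by (intro mult_left_mono) auto
    also have "\<dots> \<le> 1" using E by (simp add: field_simps)
    finally show ?thesis using L2 by (simp add: p_def L_def[symmetric])
  qed
  define B where "B = 2*E + E * Kc E"
  have B: "B = E * L - E * ln L + E * (3 + ln 2)" by (simp add: B_def Kc_def L_def algebra_simps)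
  define q where "q = ook E p"
  have intq: "(\<integral>s. (cmod s)^2 \<partial>measure_pmf q) = E"
    unfolding q_def using pp p1 E by (simp add: ook_integral)
  have finq: "finite (set_pmf q)"
    unfolding q_def ook_def by (auto intro: finite_subset[of _ "UNIV::bool set"])
  have Uq: "info (measure_pmf q) \<le> B"
    unfolding B_def
    by (rule converse) (use intq finq E E1 in \<open>auto simp: prob_space_measure_pmf integrable_measure_pmf_finite\<close>)
  have UM: "info M \<le> B" if "admissible E M" for M
  proof -
    have m: "measurable M borel = measurable borel borel"
      using that by (intro measurable_cong_sets) (auto simp: admissible_def)
    show ?thesis unfolding B_def
      by (rule converse) (use that E E1 m in \<open>auto simp: admissible_def\<close>)
  qed
  define M' where "M' = distr (measure_pmf q) borel id"
  have mpoi: "(\<lambda>s::complex. poi ((cmod s)^2) k) \<in> borel_measurable borel" for k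
    unfolding poi_def by measurable
  have out': "out_pmf M' k = out_pmf (measure_pmf q) k" for k
    unfolding out_pmf_def M'_def using mpoi[of k] by (subst integral_distr) auto
  have infoM': "info M' = info (measure_pmf q)"
  proof -
    have mg: "(\<lambda>s::complex. \<Sum>k. div_term (poi ((cmod s)^2) k) (out_pmf (measure_pmf q) k)) \<in> borel_measurable borel"
      unfolding div_term_def poi_def by measurable
    show ?thesis unfolding info_def out' unfolding M'_def using mg by (subst integral_distr) auto
  qed
  have admM': "admissible E M'"
  proof -
    have "prob_space M'" unfolding M'_def
      by (rule prob_space.prob_space_distr) (auto simp: prob_space_measure_pmf)
    moreover have "integrable M' (\<lambda>s. (cmod s)^2)" unfolding M'_def
      by (subst integrable_distr_eq) (auto simp: integrable_measure_pmf_finite finq)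
    moreover have "(\<integral>s. (cmod s)^2 \<partial>M') = E" unfolding M'_def
      by (subst integral_distr) (auto simp: intq)
    ultimately show ?thesis by (simp add: admissible_def M'_def)
  qed
  have ne: "info ` {M. admissible E M} \<noteq> {}" using admM' by auto
  have bdd: "bdd_above (info ` {M. admissible E M})" using UM by (intro bdd_aboveI[of _ B]) auto
  have Cup: "C_DD E \<le> B" unfolding C_DD_def using ne UM by (intro cSup_least) auto
  have Clow: "info (measure_pmf q) \<le> C_DD E"
    unfolding C_DD_def infoM'[symmetric] using admM' bdd by (intro cSup_upper) auto
  have low: "E * L - E * ln L - 2*E \<le> info (measure_pmf q)"
    using ook_lower[OF E] by (simp add: q_def p_def L_def)
  have ln2: "ln 2 < (1::real)" by (rule ln_2_less_1)
  have el2: "E * ln 2 \<le> E * 1" using ln2 E by (intro mult_left_mono) auto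
  have el3: "E * (3 + ln 2) = 3*E + E * ln 2" by (simp add: algebra_simps)
  have "0 \<le> C_DD E - info (measure_pmf q)" using Clow by simp
  moreover have "C_DD E - info (measure_pmf q) \<le> 6 * E" using Cup low B el2 el3 by linarith
  moreover have "\<bar>C_DD E - (E * L - E * ln L)\<bar> \<le> 4 * E" using Cup low Clow B el2 el3 unfolding abs_le_iff by linarith
  ultimately show ?thesis by (simp add: q_def L_def)
qed

lemma pstar_ok: fixes E :: real
  assumes E: "0 < E" "E \<le> exp (-2)"
  shows "0 < E/2 * ln (1/E) \<and> E/2 * ln (1/E) \<le> 1"
proof -
  define L where "L = ln (1/E)"
  have L2: "2 \<le> L"
  proof -
    have "exp 2 \<le> 1/E" using E by (simp add: exp_minus field_simps)
    then have "ln (exp 2) \<le> ln (1/E)" using E by (subst ln_le_cancel_iff) auto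
    then show ?thesis by (simp add: L_def)
  qed
  have "L \<le> 1/E - 1" unfolding L_def using E by (intro ln_le_minus_one) auto
  then have "E * L \<le> E * (1/E - 1)" using E by (intro mult_left_mono) auto
  also have "\<dots> \<le> 1" using E by (simp add: field_simps)
  finally show ?thesis using L2 E by (simp add: L_def[symmetric])
qed

theorem lemma3:
  "\<exists>pstar :: real \<Rightarrow> real.
     (\<forall>\<^sub>F E in at_right 0. 0 < pstar E \<and> pstar E \<le> 1) \<and>
     ((\<lambda>E. pstar E / ((E / 2) * ln (1 / E))) \<longlongrightarrow> 1) (at_right 0) \<and>
     (\<lambda>E. C_DD E - info (measure_pmf (ook E (pstar E)))) \<in> O[at_right 0](\<lambda>E. E) \<and>
     (\<lambda>E. C_DD E - (E * ln (1 / E) - E * ln (ln (1 / E)))) \<in> O[at_right 0](\<lambda>E. E)"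
proof (intro exI[of _ "\<lambda>E. E/2 * ln (1/E)"] conjI)
  have ev: "\<forall>\<^sub>F E in at_right 0. 0 < E \<and> E \<le> exp (-2::real)"
    by (rule eventually_at_rightI[of 0 "exp (-2)"]) auto
  show "\<forall>\<^sub>F E in at_right 0. 0 < E/2 * ln (1/E) \<and> E/2 * ln (1/E) \<le> (1::real)"
    using ev by eventually_elim (use pstar_ok in blast)
  have "\<forall>\<^sub>F E in at_right 0. E/2 * ln (1/E) / ((E / 2) * ln (1 / E)) = (1::real)"
    using ev by eventually_elim (use pstar_ok in auto)
  then show "((\<lambda>E. E/2 * ln (1/E) / ((E / 2) * ln (1 / E))) \<longlongrightarrow> (1::real)) (at_right 0)"
    by (subst tendsto_cong) auto
  show "(\<lambda>E. C_DD E - info (measure_pmf (ook E (E/2 * ln (1/E))))) \<in> O[at_right 0](\<lambda>E. E)"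
  proof (rule bigoI[of _ 6])
    show "\<forall>\<^sub>F E in at_right 0. norm (C_DD E - info (measure_pmf (ook E (E/2 * ln (1/E))))) \<le> 6 * norm E"
      using ev by eventually_elim (use bounds in auto)
  qed
  show "(\<lambda>E. C_DD E - (E * ln (1 / E) - E * ln (ln (1 / E)))) \<in> O[at_right 0](\<lambda>E. E)"
  proof (rule bigoI[of _ 4])
    show "\<forall>\<^sub>F E in at_right 0. norm (C_DD E - (E * ln (1 / E) - E * ln (ln (1 / E)))) \<le> 4 * norm E"
      using ev by eventually_elim (use bounds in auto)
  qed
qed

end
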